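(* For every positive integer $n$, every nonzero real root of $D(F_n,x)=(2x+x^2)^n+x(1+x)^{2n}$ lies in the open interval $(-2,0)$. Moreover, for every even positive integer $n$, $D(F_n,x)$ has at least two real roots in $(-2,0)$, neither of which equals $-1$ (more precisely, at least one in $(-2,-1)$ and at least one in $(-1,0)$). *)

theory Defs
  imports Complex_Main
begin

definition DF :: "nat \<Rightarrow> real \<Rightarrow> real" where
  "DF n x = (2*x + x^2)^n + x * (1 + x)^(2*n)"

end

theory Submission
  imports Defs
begin

lemma DF_t: "DF n x = (x*(x+2))^n + x * (x*(x+2)+1)^n"
proof -
  have "(1+x)^(2*n) = ((1+x)^2)^n" by (simp add: power_mult)
  also have "(1+x)^2 = x*(x+2)+1" by (simp add: power2_eq_square algebra_simps)
  finally show ?thesis unfolding DF_def by (simp add: power2_eq_square algebra_simps)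
qed

lemma cont_DF: "isCont (DF n) x"
  unfolding DF_def[abs_def] by (intro continuous_intros)

lemma part1:
  assumes "n \<ge> 1" "x \<noteq> 0" "DF n x = 0"
  shows "-2 < x \<and> x < 0"
proof (rule ccontr)
  assume "\<not> (-2 < x \<and> x < 0)"
  hence c: "x > 0 \<or> x \<le> -2" using assms(2) by linarith
  define t where "t = x*(x+2)"
  have D: "DF n x = t^n + x*(t+1)^n" using DF_t t_def by simp
  show False
  proof (cases "x > 0")
    case True
    hence "t > 0" unfolding t_def by simp
    hence "t^n + x*(t+1)^n > 0" using True by (simp add: add_pos_pos)
    thus False using D assms(3) by simp
  next
    case False
    hence x: "x \<le> -2" using c by simp
    hence t0: "t \<ge> 0" unfolding t_def by (simp add: mult_nonpos_nonpos)
    have "t^n < (t+1)^n" using t0 assms(1) by (intro power_strict_mono) auto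
    also have "(t+1)^n \<le> 2*(t+1)^n" using t0 by simp
    also have "2*(t+1)^n \<le> (-x)*(t+1)^n" using x t0 by (intro mult_right_mono) auto
    finally have "t^n + x*(t+1)^n < 0" by simp
    thus False using D assms(3) by simp
  qed
qed

lemma ineq: "m \<ge> 1 \<Longrightarrow> 8 * (225::real)^m < 2401^m"
proof (induction m rule: dec_induct)
  case base then show ?case by simp
next
  case (step m)
  have "8 * (225::real)^Suc m = 225 * (8*225^m)" by simp
  also have "\<dots> < 225 * 2401^m" using step by simp
  also have "\<dots> \<le> 2401 * 2401^m" by simp
  finally show ?case by simp
qed

lemma part2:
  assumes "n \<ge> 1" "even n"
  shows "(\<exists>x::real. -2 < x \<and> x < -1 \<and> DF n x = 0) \<and>
            (\<exists>y::real. -1 < y \<and> y < 0 \<and> DF n y = 0)"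
proof -
  obtain m where m: "n = 2*m" using assms(2) by auto
  have m1: "m \<ge> 1" using m assms(1) by simp
  have a: "DF n (-2) = -2" unfolding DF_def using assms(1) by simp
  have b: "DF n (-1) = 1" unfolding DF_def using assms(1) assms(2) by simp
  have "DF n (-1/8) = (225/4096)^m - (1/8)*(2401/4096)^m"
    unfolding DF_def m power_mult by (simp add: power2_eq_square flip: power_mult_distrib)
  also have "\<dots> = (8*225^m - 2401^m) / (8*4096^m)"
    by (simp add: field_simps power_divide)
  also have "\<dots> < 0" using ineq[OF m1] by (intro divide_neg_pos) auto
  finally have c: "DF n (-1/8) < 0" .
  obtain x where x: "-2 \<le> x" "x \<le> -1" "DF n x = 0"
    using IVT[of "DF n" "-2" 0 "-1"] a b cont_DF by auto
  obtain y where y: "-1 \<le> y" "y \<le> -1/8" "DF n y = 0"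
    using IVT2[of "DF n" "-1/8" 0 "-1"] b c cont_DF by auto
  have "x \<noteq> -2" "x \<noteq> -1" using x a b by auto
  moreover have "y \<noteq> -1" using y b by auto
  ultimately show ?thesis using x y by (intro conjI exI[of _ x] exI[of _ y]) auto
qed

theorem mainTheorem3:
  shows "(\<forall>n::nat. n \<ge> 1 \<longrightarrow> (\<forall>x::real. x \<noteq> 0 \<and> DF n x = 0 \<longrightarrow> -2 < x \<and> x < 0))
       \<and> (\<forall>n::nat. n \<ge> 1 \<and> even n \<longrightarrow>
            (\<exists>x::real. -2 < x \<and> x < -1 \<and> DF n x = 0) \<and>
            (\<exists>y::real. -1 < y \<and> y < 0 \<and> DF n y = 0))"
  using part1 part2 by blast

end
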